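(* Let $\mathcal{C}$ be a combinatorial class with generating function $C(x)=\sum_{n\ge0}c_nx^n$, not reduced to its objects of size $0$, with radius of convergence $\rho>0$; let $C^\bullet(x)=xC'(x)$ and fix $x\in(0,\rho)$. Assume that for every $y\in(0,x]$ a Boltzmann sampler $\Gamma_y(\Theta\mathcal{C})$ with parameter $y$ for the pointed class $\Theta\mathcal{C}$ is available. Consider the procedure: draw $U\in[0,1]$ with density $u\mapsto \dfrac{C^\bullet(xu)}{u\,(C(x)-c_0)}$; independently, with probability $c_0/C(x)$ output a uniformly random object of size $0$ of $\mathcal{C}$, and otherwise run $\Gamma_{Ux}(\Theta\mathcal{C})$ and output the underlying object of $\mathcal{C}$ (forgetting the point). Then the output is distributed as a Boltzmann sampler for $\mathcal{C}$ with parameter $x$: each $a\in\mathcal{C}$ is output with probability $x^{|a|}/C(x)$. *)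

theory Defs
  imports "HOL-Probability.Probability"
begin

definition gf :: "'a set \<Rightarrow> ('a \<Rightarrow> nat) \<Rightarrow> real \<Rightarrow> real" where
  "gf A sz y = (\<Sum>n. real (card {a\<in>A. sz a = n}) * y ^ n)"

text \<open>The pointed class: objects together with a distinguished atom 1..|a|;
  size of (a,i) is the size of a.\<close>
definition pointed :: "('a \<Rightarrow> nat) \<Rightarrow> ('a \<times> nat) set" where
  "pointed sz = {(a, i). 1 \<le> i \<and> i \<le> sz a}"

definition boltzmann :: "'a set \<Rightarrow> ('a \<Rightarrow> nat) \<Rightarrow> real \<Rightarrow> 'a pmf \<Rightarrow> bool" where
  "boltzmann A sz y P \<longleftrightarrow>
     (\<forall>a. pmf P a = (if a \<in> A then y ^ sz a / gf A sz y else 0))"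

definition sampler_proc ::
    "('a \<Rightarrow> nat) \<Rightarrow> real \<Rightarrow> (real \<Rightarrow> ('a \<times> nat) pmf) \<Rightarrow> 'a measure" where
  "sampler_proc sz x Gam =
     (let C = gf UNIV sz;
          c0 = real (card {a. sz a = 0});
          Cb = (\<lambda>y. y * deriv C y);
          U = density (restrict_space lborel {0<..1})
                (\<lambda>u. ennreal (Cb (x * u) / (u * (C x - c0))))
      in bind (measure_pmf (bernoulli_pmf (c0 / C x)))
           (\<lambda>b. if b then measure_pmf (pmf_of_set {a. sz a = 0})
                else bind U (\<lambda>u. measure_pmf (map_pmf fst (Gam (u * x))))))"

end

theory Submission
  imports Defs
begin

lemma pow_int:
  assumes "0 \<le> k"
  shows "(\<integral>\<^sup>+u. ennreal (k * real (Suc n) * u^n) \<partial>restrict_space lborel {0<..1}) = ennreal k"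
proof -
  have "(\<integral>\<^sup>+u. ennreal (k * real (Suc n) * u^n) \<partial>restrict_space lborel {0<..1})
     = (\<integral>\<^sup>+u. ennreal (k * real (Suc n) * u^n) * indicator {0<..1} u \<partial>lborel)"
    by (subst nn_integral_restrict_space) auto
  also have "\<dots> = (\<integral>\<^sup>+u. ennreal (k * real (Suc n) * u^n) * indicator {0..1} u \<partial>lborel)"
    by (rule nn_integral_cong_AE) (use AE_lborel_singleton[of "0::real"] in eventually_elim, auto simp: indicator_def)
  also have "\<dots> = ennreal (k * 1 ^ Suc n - k * 0 ^ Suc n)"
  proof (rule nn_integral_FTC_Icc)
    show "(\<lambda>u. k * real (Suc n) * u ^ n) \<in> borel_measurable borel" by measurable
    fix u :: real assume "u \<in> {0..1}"
    show "((\<lambda>u. k * u ^ Suc n) has_real_derivative k * real (Suc n) * u ^ n) (at u)"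
      using DERIV_cmult[OF DERIV_pow[of "Suc n" u], of k] by (simp add: mult.assoc)
    show "0 \<le> k * real (Suc n) * u ^ n" using assms \<open>u \<in> {0..1}\<close> by auto
  qed auto
  finally show ?thesis by simp
qed

lemma alg: "0 < u \<Longrightarrow> 0 < (x::real) \<Longrightarrow> 0 < d \<Longrightarrow> 0 < K \<Longrightarrow>
  x * d / K * (real (Suc m) * (u * x) ^ Suc m / ((u * x) * d)) = x ^ Suc m / K * real (Suc m) * u ^ (Suc m - 1)"
  by (simp add: power_mult_distrib)

lemma card_pointed:
  assumes "finite {a. sz a = n}"
  shows "card {p \<in> pointed sz. sz (fst p) = n} = n * card {a. sz a = n}"
proof -
  have "{p \<in> pointed sz. sz (fst p) = n} = {a. sz a = n} \<times> {1..n}"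
    by (auto simp: pointed_def)
  then show ?thesis using assms by (simp add: card_cartesian_product)
qed

theorem mainTheorem7:
  fixes sz :: "'a \<Rightarrow> nat" and x :: real and Gam :: "real \<Rightarrow> ('a \<times> nat) pmf"
  assumes fin: "\<And>n. finite {a. sz a = n}"
    and nontriv: "\<exists>a. sz a > 0"
    and rho_pos: "conv_radius (\<lambda>n. real (card {a. sz a = n})) > 0"
    and x_pos: "0 < x"
    and x_lt: "ereal x < conv_radius (\<lambda>n. real (card {a. sz a = n}))"
    and samplers: "\<And>y. y \<in> {0<..x} \<Longrightarrow> boltzmann (pointed sz) (\<lambda>p. sz (fst p)) y (Gam y)"
  shows "\<forall>a. measure (sampler_proc sz x Gam) {a} = x ^ sz a / gf UNIV sz x"
proof -
  define c where "c = (\<lambda>n. real (card {a. sz a = n}))"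
  define C where "C = gf UNIV sz"
  define c0 where "c0 = real (card {a. sz a = 0})"
  define D where "D = (\<lambda>y::real. \<Sum>n. diffs c n * y ^ n)"
  define G where "G = gf (pointed sz) (\<lambda>p. sz (fst p))"
  define R where "R = restrict_space (lborel :: real measure) {0<..1}"
  define U where "U = density R (\<lambda>u. ennreal (x * u * deriv C (x * u) / (u * (C x - c0))))"
  define N where "N = (\<lambda>u. measure_pmf (map_pmf fst (Gam (u * x))))"
  have sp: "sampler_proc sz x Gam = measure_pmf (bernoulli_pmf (c0 / C x)) \<bind>
      (\<lambda>b. if b then measure_pmf (pmf_of_set {a. sz a = 0}) else U \<bind> N)"
    unfolding sampler_proc_def Let_def C_def c0_def U_def R_def N_def by (simp add: mult_ac)
  have C_eq: "C y = (\<Sum>n. c n * y ^ n)" for y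
    by (simp add: C_def gf_def c_def)
  have c0c: "c0 = c 0" by (simp add: c0_def c_def)
  obtain K where xK: "ereal x < ereal K" and Kr: "ereal K < conv_radius c"
    using ereal_dense2[OF x_lt[folded c_def]] by blast
  have Kpos: "0 < K" using xK x_pos by simp
  have sumc: "summable (\<lambda>n. c n * y ^ n)" if "norm y < K" for y
  proof (rule summable_in_conv_radius)
    have "ereal (norm y) < ereal K" using that by simp
    then show "ereal (norm y) < conv_radius c" using Kr by (rule order.strict_trans)
  qed
  have sumd: "summable (\<lambda>n. diffs c n * y ^ n)" if "norm y < K" for y
    by (rule termdiff_converges[OF that sumc])
  have derivC: "deriv C y = D y" if "norm y < K" for y
  proof -
    have "(C has_field_derivative D y) (at y)"
      unfolding D_def C_eq[abs_def] by (rule termdiffs_strong'[OF sumc that])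
    then show ?thesis by (rule DERIV_imp_deriv)
  qed
  have Gs: "G y = (\<Sum>n. real n * c n * y ^ n)" for y
      unfolding G_def gf_def c_def using card_pointed[OF fin] by (simp add: mult_ac)
  have G_eq: "G y = y * D y" and Gsum: "summable (\<lambda>n. real n * c n * y ^ n)" if "norm y < K" for y
  proof -
    define f where "f = (\<lambda>n. real n * c n * y ^ n)"
    have G1: "G y = suminf f"
      unfolding G_def gf_def f_def c_def using card_pointed[OF fin] by (simp add: mult_ac)
    have fS: "(\<lambda>n. y * (diffs c n * y ^ n)) = (\<lambda>n. f (Suc n))"
      by (auto simp: f_def diffs_def mult_ac)
    have sS: "summable (\<lambda>n. f (Suc n))"
      using summable_mult[OF sumd[OF that], of y] fS by simp
    then have sf: "summable f" by (simp add: summable_Suc_iff)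
    have "y * D y = (\<Sum>n. y * (diffs c n * y ^ n))"
      unfolding D_def by (rule suminf_mult[OF sumd[OF that], symmetric])
    also have "\<dots> = suminf f - f 0" unfolding fS by (rule suminf_split_head[OF sf])
    also have "\<dots> = suminf f" by (simp add: f_def)
    finally show "G y = y * D y" using G1 by simp
    show "summable (\<lambda>n. real n * c n * y ^ n)" using sf by (simp add: f_def)
  qed
  obtain a0 where a0: "sz a0 > 0" using nontriv by blast
  define m where "m = sz a0"
  have cm: "c m > 0" unfolding c_def m_def using fin[of "sz a0"]
    by (metis (mono_tags, lifting) card_gt_0_iff empty_iff mem_Collect_eq of_nat_0_less_iff)
  have cnn: "c n \<ge> 0" for n by (simp add: c_def)
  have Dpos: "0 < D y" if "0 < y" "y \<le> x" for y
  proof -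
    have ny: "norm y < K" using that xK by auto
    have "0 < (\<Sum>n. real n * c n * y ^ n)"
      by (rule suminf_pos2[OF Gsum[OF ny], of m]) (use that cm a0 cnn in \<open>auto simp: m_def\<close>)
    then have "0 < y * D y" using G_eq[OF ny] Gs[of y] by simp
    then show ?thesis using that by (simp add: zero_less_mult_iff)
  qed
  have nx: "norm x < K" using xK x_pos by auto
  have Cc0_eq: "C x - c0 = (\<Sum>n. c (Suc n) * x ^ Suc n)"
    using suminf_split_head[OF sumc[OF nx]] by (simp add: C_eq c0c)
  have sS: "summable (\<lambda>n. c (Suc n) * x ^ Suc n)"
      using sumc[OF nx] by (subst summable_Suc_iff) 
  have Cc0: "0 < C x - c0"
  proof -
    have "0 < (\<Sum>n. c (Suc n) * x ^ Suc n)"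
      by (rule suminf_pos2[OF sS, of "m - 1"]) (use x_pos cm a0 cnn in \<open>auto simp: m_def\<close>)
    then show ?thesis using Cc0_eq by simp
  qed
  have pmfG: "pmf (map_pmf fst (Gam y)) a = real (sz a) * y ^ sz a / (y * D y)" if "0 < y" "y \<le> x" for y a
  proof -
    have ny: "norm y < K" using that xK by auto
    have B: "pmf (Gam y) p = (if p \<in> pointed sz then y ^ sz (fst p) / G y else 0)" for p
      using samplers[of y] that unfolding boltzmann_def G_def by (cases p) auto
    define S where "S = {a} \<times> {1..sz a}"
    have sub: "set_pmf (Gam y) \<subseteq> pointed sz"
      using B by (auto simp: set_pmf_iff split: if_splits)
    have eqS: "fst -` {a} \<inter> set_pmf (Gam y) = S \<inter> set_pmf (Gam y)"
      using sub by (auto simp: S_def pointed_def)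
    have "pmf (map_pmf fst (Gam y)) a = measure (Gam y) (fst -` {a})" by (rule pmf_map)
    also have "\<dots> = measure (Gam y) (S \<inter> set_pmf (Gam y))"
      by (metis eqS measure_Int_set_pmf)
    also have "\<dots> = measure (Gam y) S" by (rule measure_Int_set_pmf)
    also have "\<dots> = sum (pmf (Gam y)) S" by (rule measure_measure_pmf_finite) (simp add: S_def)
    also have "\<dots> = sum (\<lambda>p. y ^ sz a / G y) S"
      by (rule sum.cong) (auto simp: B S_def pointed_def)
    also have "\<dots> = real (sz a) * y ^ sz a / G y" by (simp add: S_def)
    finally show ?thesis using G_eq[OF ny] by simp
  qed
  have Dm[measurable]: "D \<in> borel_measurable borel"
    unfolding D_def by measurable
  have spaceR: "space R = {0<..1}" by (simp add: R_def)
  have setsR: "sets R = sets (restrict_space lborel {0<..1})" by (simp add: R_def)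
  have nxu: "norm (x * u) < K" if "u \<in> space R" for u
  proof -
    have "x * u \<le> x" using that x_pos by (simp add: spaceR mult_le_cancel_left1)
    moreover have "0 \<le> x * u" using that x_pos by (simp add: spaceR)
    ultimately show ?thesis using nx by simp
  qed
  have geq: "ennreal (x * u * deriv C (x * u) / (u * (C x - c0))) = ennreal (x * D (x * u) / (C x - c0))"
    if "u \<in> space R" for u
    using that derivC[OF nxu[OF that]] by (simp add: spaceR)
  have gm2: "(\<lambda>u. ennreal (x * D (x * u) / (C x - c0))) \<in> borel_measurable R"
    unfolding R_def by (rule measurable_restrict_space1) measurable
  have gm: "(\<lambda>u. ennreal (x * u * deriv C (x * u) / (u * (C x - c0)))) \<in> borel_measurable R"
    using measurable_cong[of R, OF geq] gm2 by simp
  define k where "k = (\<lambda>n. c (Suc n) * x ^ Suc n / (C x - c0))"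
  have knn: "0 \<le> k n" for n using Cc0 x_pos cnn by (simp add: k_def)
  have gser: "ennreal (x * u * deriv C (x * u) / (u * (C x - c0))) = (\<Sum>n. ennreal (k n * real (Suc n) * u ^ n))"
    if "u \<in> space R" for u
  proof -
    have u0: "0 < u" using that by (simp add: spaceR)
    have s1: "summable (\<lambda>n. x * (diffs c n * (x * u) ^ n) / (C x - c0))"
      by (intro summable_divide summable_mult sumd nxu that)
    have teq: "x * (diffs c n * (x * u) ^ n) / (C x - c0) = k n * real (Suc n) * u ^ n" for n
      by (simp add: k_def diffs_def power_mult_distrib field_simps)
    have "x * D (x * u) / (C x - c0) = (\<Sum>n. x * (diffs c n * (x * u) ^ n) / (C x - c0))"
      unfolding D_def using sumd[OF nxu[OF that]]
      by (simp add: suminf_divide suminf_mult summable_mult)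
    also have "\<dots> = (\<Sum>n. k n * real (Suc n) * u ^ n)" by (simp add: teq)
    finally have "ennreal (x * D (x * u) / (C x - c0)) = ennreal (\<Sum>n. k n * real (Suc n) * u ^ n)" by simp
    also have "\<dots> = (\<Sum>n. ennreal (k n * real (Suc n) * u ^ n))"
      using s1 unfolding teq by (intro suminf_ennreal2[symmetric]) (use knn u0 in auto)
    finally show ?thesis using geq[OF that] by simp
  qed
  have spaceU: "space U = {0<..1}" by (simp add: U_def spaceR)
  have Uprob: "prob_space U"
  proof (rule prob_spaceI)
    have "emeasure U (space U) = (\<integral>\<^sup>+u. ennreal (x * u * deriv C (x * u) / (u * (C x - c0))) * indicator (space R) u \<partial>R)"
      unfolding U_def using emeasure_density[OF gm sets.top] by simp
    also have "\<dots> = (\<integral>\<^sup>+u. (\<Sum>n. ennreal (k n * real (Suc n) * u ^ n)) \<partial>R)"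
      by (rule nn_integral_cong) (simp only: gser indicator_simps(1) mult_1_right)
    also have "\<dots> = (\<Sum>n. \<integral>\<^sup>+u. ennreal (k n * real (Suc n) * u ^ n) \<partial>R)"
      by (rule nn_integral_suminf) (unfold R_def, rule measurable_restrict_space1, measurable)
    also have "\<dots> = (\<Sum>n. ennreal (k n))"
      unfolding R_def by (simp only: pow_int[OF knn])
    also have "\<dots> = ennreal (\<Sum>n. k n)"
    proof (rule suminf_ennreal2[OF knn])
      show "summable k" unfolding k_def
        by (intro summable_divide sS)
    qed
    also have "(\<Sum>n. k n) = 1"
    proof -
      have "(\<Sum>n. k n) = (\<Sum>n. c (Suc n) * x ^ Suc n) / (C x - c0)"
        unfolding k_def
        by (rule suminf_divide) (rule sS)
      then show ?thesis using Cc0 Cc0_eq by simp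
    qed
    finally show "emeasure U (space U) = 1" by simp
  qed
  have cUNIV: "countable (UNIV :: 'a set)"
  proof -
    have "UNIV = (\<Union>n. {a. sz a = n})" by auto
    then show ?thesis by (metis countable_UN[of UNIV] countable_finite fin countableI_type)
  qed
  interpret csf: sigma_finite_measure "count_space (UNIV :: 'a set)"
    by (rule sigma_finite_measure_count_space_countable[OF cUNIV])
  have setsU: "sets U = sets R" by (simp add: U_def)
  have uxr: "0 < u * x" "u * x \<le> x" if "u \<in> space R" for u
    using that x_pos by (auto simp: spaceR mult_le_cancel_right1)
  have Nm: "N \<in> measurable U (subprob_algebra (count_space UNIV))"
    unfolding measurable_cong_sets[OF setsU refl]
  proof (rule measurable_subprob_algebra)
    fix u show "subprob_space (N u)" by (simp add: N_def subprob_space_measure_pmf)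
    show "sets (N u) = sets (count_space UNIV)" by (simp add: N_def)
  next
    fix A :: "'a set"
    define h where "h = (\<lambda>u a. ennreal (real (sz a) * (u * x) ^ sz a / ((u * x) * D (u * x))) * indicator A a)"
    have eqA: "emeasure (N u) A = (\<integral>\<^sup>+ a. h u a \<partial>count_space UNIV)" if "u \<in> space R" for u
    proof -
      have "emeasure (N u) A = (\<integral>\<^sup>+ a. indicator A a \<partial>N u)"
        by (rule nn_integral_indicator[symmetric]) (simp add: N_def)
      also have "\<dots> = (\<integral>\<^sup>+ a. ennreal (pmf (map_pmf fst (Gam (u * x))) a) * indicator A a \<partial>count_space UNIV)"
        unfolding N_def by (rule nn_integral_measure_pmf)
      also have "\<dots> = (\<integral>\<^sup>+ a. h u a \<partial>count_space UNIV)"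
        unfolding h_def by (simp add: pmfG[OF uxr[OF that]])
      finally show ?thesis .
    qed
    have hm: "(\<lambda>u. \<integral>\<^sup>+ a. h u a \<partial>count_space UNIV) \<in> borel_measurable R"
    proof (rule csf.borel_measurable_nn_integral)
      have "(\<lambda>p. (\<lambda>i p. h (fst p) i) (snd p) p) \<in> borel_measurable (R \<Otimes>\<^sub>M count_space UNIV)"
      proof (rule measurable_compose_countable'[OF _ _ cUNIV])
        fix i :: 'a
        show "(\<lambda>p. h (fst p) i) \<in> borel_measurable (R \<Otimes>\<^sub>M count_space UNIV)"
        proof (rule measurable_compose[OF measurable_fst])
          show "(\<lambda>u. h u i) \<in> borel_measurable R"
            unfolding h_def R_def by (rule measurable_restrict_space1) measurable
        qed
        show "snd \<in> measurable (R \<Otimes>\<^sub>M count_space UNIV) (count_space UNIV)" by measurable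
      qed
      then show "case_prod h \<in> borel_measurable (R \<Otimes>\<^sub>M count_space UNIV)"
        by (simp add: case_prod_beta')
    qed
    show "(\<lambda>u. emeasure (N u) A) \<in> borel_measurable R"
      using measurable_cong[of R, OF eqA] hm by simp
  qed
  have inner: "emeasure (U \<bind> N) {a} = (if sz a = 0 then 0 else ennreal (x ^ sz a / (C x - c0)))" for a
  proof -
    have Nam: "(\<lambda>u. emeasure (N u) {a}) \<in> borel_measurable R"
      using measurable_compose[OF Nm measurable_emeasure_subprob_algebra[of "{a}" "count_space UNIV"]]
      unfolding measurable_cong_sets[OF setsU refl] by simp
    have "emeasure (U \<bind> N) {a} = (\<integral>\<^sup>+u. emeasure (N u) {a} \<partial>U)"
      by (rule emeasure_bind[OF _ Nm]) (auto simp: spaceU)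
    also have "\<dots> = (\<integral>\<^sup>+u. ennreal (x * u * deriv C (x * u) / (u * (C x - c0))) * emeasure (N u) {a} \<partial>R)"
      unfolding U_def by (rule nn_integral_density[OF gm Nam])
    also have "\<dots> = (\<integral>\<^sup>+u. ennreal (x ^ sz a / (C x - c0) * real (sz a) * u ^ (sz a - 1)) \<partial>R)"
    proof (rule nn_integral_cong)
      fix u assume u: "u \<in> space R"
      have u0: "0 < u" using u by (simp add: spaceR)
      have Dp: "0 < D (u * x)" using Dpos[OF uxr[OF u]] .
      have em: "emeasure (N u) {a} = ennreal (real (sz a) * (u * x) ^ sz a / ((u * x) * D (u * x)))"
        unfolding N_def by (simp add: emeasure_pmf_single pmfG[OF uxr[OF u]])
      have req: "x * D (x * u) / (C x - c0) * (real (sz a) * (u * x) ^ sz a / ((u * x) * D (u * x)))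
          = x ^ sz a / (C x - c0) * real (sz a) * u ^ (sz a - 1)"
      proof (cases "sz a")
        case 0 then show ?thesis by simp
      next
        case (Suc m)
        have e: "D (x * u) = D (u * x)" by (simp add: mult.commute)
        show ?thesis unfolding e Suc by (rule alg[OF u0 x_pos Dp Cc0])
      qed
      show "ennreal (x * u * deriv C (x * u) / (u * (C x - c0))) * emeasure (N u) {a}
          = ennreal (x ^ sz a / (C x - c0) * real (sz a) * u ^ (sz a - 1))"
      proof -
        have e: "D (x * u) = D (u * x)" by (simp add: mult.commute)
        have nn1: "0 \<le> x * D (x * u) / (C x - c0)" using x_pos Dp Cc0 e by simp
        have nn2: "0 \<le> real (sz a) * (u * x) ^ sz a / ((u * x) * D (u * x))" using x_pos Dp u0 by simp
        show ?thesis unfolding geq[OF u] em ennreal_mult[OF nn1 nn2, symmetric] req ..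
      qed
    qed
    also have "\<dots> = (if sz a = 0 then 0 else ennreal (x ^ sz a / (C x - c0)))"
    proof (cases "sz a")
      case 0 then show ?thesis by simp
    next
      case (Suc m)
      have "(\<integral>\<^sup>+u. ennreal (x ^ sz a / (C x - c0) * real (Suc m) * u ^ m) \<partial>R) = ennreal (x ^ sz a / (C x - c0))"
        unfolding R_def by (rule pow_int) (use x_pos Cc0 in simp)
      then show ?thesis using Suc by simp
    qed
    finally show ?thesis .
  qed
  have Cxpos: "0 < C x" using Cc0 c0_def by (smt (verit) of_nat_0_le_iff)
  define p where "p = c0 / C x"
  have p0: "0 \<le> p" and p1: "p \<le> 1" using Cc0 Cxpos by (auto simp: p_def c0_def)
  define F where "F = (\<lambda>b. if b then measure_pmf (pmf_of_set {a. sz a = 0}) else U \<bind> N)"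
  have spU: "space U \<noteq> {}" by (auto simp: spaceU)
  have Fm: "F \<in> measurable (measure_pmf (bernoulli_pmf p)) (subprob_algebra (count_space UNIV))"
    unfolding measurable_cong_sets[OF sets_measure_pmf_count_space refl] measurable_count_space_eq1
  proof
    fix b :: bool
    show "F b \<in> space (subprob_algebra (count_space UNIV))"
    proof (cases b)
      case True then show ?thesis by (simp add: F_def space_subprob_algebra subprob_space_measure_pmf)
    next
      case False
      have "subprob_space (U \<bind> N)"
        by (rule subprob_space_bind[OF prob_space_imp_subprob_space[OF Uprob] Nm])
      moreover have "sets (U \<bind> N) = sets (count_space UNIV)"
        by (rule sets_bind[OF _ spU]) (simp add: N_def)
      ultimately show ?thesis using False by (simp add: F_def space_subprob_algebra)
    qed
  qed
  have sp2: "sampler_proc sz x Gam = measure_pmf (bernoulli_pmf p) \<bind> F"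
    unfolding sp p_def F_def ..
  show ?thesis
  proof
    fix a
    have "emeasure (sampler_proc sz x Gam) {a} = (\<integral>\<^sup>+b. emeasure (F b) {a} \<partial>bernoulli_pmf p)"
      unfolding sp2 by (rule emeasure_bind[OF _ Fm]) auto
    also have "\<dots> = emeasure (F True) {a} * ennreal p + emeasure (F False) {a} * ennreal (1 - p)"
      using p0 p1 by simp
    also have "\<dots> = ennreal (x ^ sz a / C x)"
    proof (cases "sz a = 0")
      case True
      have fS: "finite {a. sz a = 0}" by (rule fin)
      have ne: "{a. sz a = 0} \<noteq> {}" using True by auto
      have c0p: "0 < c0" unfolding c0_def using fS ne by (simp add: card_gt_0_iff)
      have "emeasure (F True) {a} = ennreal (1 / c0)"
        using True fS ne by (simp add: F_def emeasure_pmf_single pmf_of_set c0_def)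
      then have "emeasure (F True) {a} * ennreal p + emeasure (F False) {a} * ennreal (1 - p)
          = ennreal (1 / c0) * ennreal p"
        using True by (simp add: F_def inner)
      also have "\<dots> = ennreal (1 / c0 * p)" by (rule ennreal_mult[symmetric]) (use c0p p0 in auto)
      also have "1 / c0 * p = x ^ sz a / C x" using True c0p by (simp add: p_def)
      finally show ?thesis .
    next
      case False
      have t1: "emeasure (F True) {a} * ennreal p = 0"
      proof (cases "c0 = 0")
        case True then show ?thesis by (simp add: p_def)
      next
        case c0ne: False
        have ne: "{a. sz a = 0} \<noteq> {}" using c0ne unfolding c0_def by (metis card.empty of_nat_0)
        show ?thesis using False ne fin[of 0]
          by (simp add: F_def emeasure_pmf_single pmf_of_set)
      qed
      have "emeasure (F False) {a} * ennreal (1 - p) = ennreal (x ^ sz a / (C x - c0)) * ennreal (1 - p)"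
        using False by (simp add: F_def inner)
      also have "\<dots> = ennreal (x ^ sz a / (C x - c0) * (1 - p))"
        by (rule ennreal_mult[symmetric]) (use x_pos Cc0 p1 in auto)
      also have "x ^ sz a / (C x - c0) * (1 - p) = x ^ sz a / C x"
        using Cc0 Cxpos by (simp add: p_def field_simps)
      finally show ?thesis using t1 by simp
    qed
    finally have "emeasure (sampler_proc sz x Gam) {a} = ennreal (x ^ sz a / C x)" .
    then show "measure (sampler_proc sz x Gam) {a} = x ^ sz a / gf UNIV sz x"
      using x_pos Cxpos by (simp add: measure_def C_def)
  qed
qed

end
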